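(* Let $k\ge 2$, let $\lambda_1,\ldots,\lambda_k$ be nonzero integers with $\gcd(\lambda_1,\ldots,\lambda_k)=1$, $g_i=\gcd(\lambda_j:j\ne i)$, and $p=\prod_{i=1}^k g_i$. Let $A\subset\mathbb{Z}$ be finite. For each $1\le i\le k$ write $A=\bigcup_{j=1}^{m_i}A_{ij}$ (disjoint) where the $A_{ij}$ are the nonempty intersections of $A$ with residue classes mod $g_i$, $A_{ij}=a_{ij}+g_i\cdot A'_{ij}$ with $0\le a_{ij}<g_i$. Similarly write $A=\bigcup_{e=1}^m P_e$ (disjoint) where the $P_e$ are the nonempty intersections of $A$ with residue classes mod $p$, $P_e=p_e+p\cdot P'_e$ with $0\le p_e<p$. For fixed $e$ and each $i$, let $e_i\in\{1,\dots,m_i\}$ be the index with $p_e\equiv a_{ie_i}\pmod{g_i}$ (so $P_e=\bigcap_i A_{ie_i}$). Suppose that $A'_{ie_i}$ is fully distributed mod $g_i$ for every $1\le i\le k$. Then either $P'_e$ is fully distributed mod $g_i$ for every $1\le i\le k$, or $$|\lambda_1\cdot A_{1e_1}+\cdots+\lambda_k\cdot A_{ke_k}|\ \ge\ |\lambda_1\cdot P_e+\cdots+\lambda_k\cdot P_e|+|P_e|.$$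
   Context: For an integer $d$ and a finite set $A$, $d\cdot A=\{da:a\in A\}$, $x+A=\{x+a:a\in A\}$; sums of sets are Minkowski sums. A set $A\subset\mathbb{Z}$ is fully distributed (FD) mod $q$ if it intersects every residue class mod $q$. The $g_i$ are pairwise coprime. *)

theory Defs
  imports "HOL-Number_Theory.Number_Theory"
begin

definition dil :: "int \<Rightarrow> int set \<Rightarrow> int set" where
  "dil d A = (\<lambda>a. d * a) ` A"

definition msum :: "nat \<Rightarrow> (nat \<Rightarrow> int set) \<Rightarrow> int set" where
  "msum k B = {(\<Sum>i<k. x i) | x. \<forall>i<k. x i \<in> B i}"

definition FD :: "int set \<Rightarrow> int \<Rightarrow> bool" where
  "FD A q \<longleftrightarrow> (\<forall>c. \<exists>a\<in>A. [a = c] (mod q))"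

definition rescl :: "int set \<Rightarrow> int \<Rightarrow> int \<Rightarrow> int set" where
  "rescl A q r = {a \<in> A. a mod q = r mod q}"

text \<open>The set A' with rescl A q r = (r mod q) + q * A'.\<close>
definition redcl :: "int set \<Rightarrow> int \<Rightarrow> int \<Rightarrow> int set" where
  "redcl A q r = (\<lambda>a. (a - r mod q) div q) ` rescl A q r"

end

theory Submission
  imports Defs
begin

lemma msum_finite:
  assumes "\<forall>i<k. finite (B i)"
  shows "finite (msum k B)"
proof -
  have "msum k B \<subseteq> (\<lambda>x. \<Sum>i<k. x i) ` (PiE {..<k} B)"
  proof
    fix s assume "s \<in> msum k B"
    then obtain x where x: "s = (\<Sum>i<k. x i)" "\<forall>i<k. x i \<in> B i"
      unfolding msum_def by blast
    have "restrict x {..<k} \<in> PiE {..<k} B" using x(2) by auto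
    moreover have "s = (\<Sum>i<k. restrict x {..<k} i)" using x(1) by simp
    ultimately show "s \<in> (\<lambda>x. \<Sum>i<k. x i) ` (PiE {..<k} B)" by blast
  qed
  moreover have "finite (PiE {..<k} B)" using assms by (intro finite_PiE) auto
  ultimately show ?thesis using finite_subset by blast
qed

lemma msum_mono:
  assumes "\<forall>i<k. B i \<subseteq> C i"
  shows "msum k B \<subseteq> msum k C"
  using assms unfolding msum_def by blast

lemma g_pos:
  fixes lam :: "nat \<Rightarrow> int"
  assumes "k \<ge> 2" "\<forall>i<k. lam i \<noteq> 0" "j < k"
  shows "Gcd (lam ` ({..<k}-{j})) > 0"
proof -
  define i0 where "i0 = (if j = 0 then 1 else (0::nat))"
  have i0: "i0 < k" "i0 \<noteq> j" unfolding i0_def using assms(1,3) by auto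
  have "lam i0 \<in> lam ` ({..<k}-{j})" using i0 by auto
  moreover have "lam i0 \<noteq> 0" using assms(2) i0 by auto
  ultimately have "\<not> lam ` ({..<k}-{j}) \<subseteq> {0}" by blast
  then have "Gcd (lam ` ({..<k}-{j})) \<noteq> 0" by (simp only: Gcd_0_iff) simp
  moreover have "Gcd (lam ` ({..<k}-{j})) \<ge> 0" by (rule Gcd_int_greater_eq_0)
  ultimately show ?thesis by linarith
qed

lemma cop_lam:
  fixes lam :: "nat \<Rightarrow> int"
  assumes "Gcd (lam ` {..<k}) = 1" "j < k"
  shows "coprime (lam j) (Gcd (lam ` ({..<k}-{j})))"
proof (rule coprimeI)
  fix c assume c: "c dvd lam j" "c dvd Gcd (lam ` ({..<k}-{j}))"
  have "\<forall>b\<in>lam ` {..<k}. c dvd b"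
  proof
    fix b assume "b \<in> lam ` {..<k}"
    then obtain l where l: "l < k" "b = lam l" by auto
    show "c dvd b"
    proof (cases "l = j")
      case True then show ?thesis using c l by simp
    next
      case False
      then have "Gcd (lam ` ({..<k}-{j})) dvd lam l" using l by (intro Gcd_dvd) auto
      then show ?thesis using c l dvd_trans by blast
    qed
  qed
  then have "c dvd 1" using assms(1) Gcd_greatest by metis
  then show "is_unit c" by simp
qed

lemma cop_g:
  fixes lam :: "nat \<Rightarrow> int"
  assumes "Gcd (lam ` {..<k}) = 1" "i < k" "j < k" "i \<noteq> j"
  shows "coprime (Gcd (lam ` ({..<k}-{i}))) (Gcd (lam ` ({..<k}-{j})))"
proof (rule coprimeI)
  fix c assume c: "c dvd Gcd (lam ` ({..<k}-{i}))" "c dvd Gcd (lam ` ({..<k}-{j}))"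
  have "\<forall>b\<in>lam ` {..<k}. c dvd b"
  proof
    fix b assume "b \<in> lam ` {..<k}"
    then obtain l where l: "l < k" "b = lam l" by auto
    show "c dvd b"
    proof (cases "l = i")
      case True
      then have "Gcd (lam ` ({..<k}-{j})) dvd lam l" using l assms by (intro Gcd_dvd) auto
      then show ?thesis using c l dvd_trans by blast
    next
      case False
      then have "Gcd (lam ` ({..<k}-{i})) dvd lam l" using l by (intro Gcd_dvd) auto
      then show ?thesis using c l dvd_trans by blast
    qed
  qed
  then have "c dvd 1" using assms(1) Gcd_greatest by metis
  then show "is_unit c" by simp
qed

theorem mainTheorem4:
  fixes k :: nat and lam :: "nat \<Rightarrow> int" and g :: "nat \<Rightarrow> int"
    and p :: int and A :: "int set" and r :: int
  assumes "k \<ge> 2"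
    and "\<forall>i<k. lam i \<noteq> 0"
    and "Gcd (lam ` {..<k}) = 1"
    and "\<forall>i<k. g i = Gcd (lam ` ({..<k} - {i}))"
    and "p = (\<Prod>i<k. g i)"
    and "finite A"
    and "0 \<le> r" and "r < p"
    and "rescl A p r \<noteq> {}"
    and "\<forall>i<k. FD (redcl A (g i) r) (g i)"
  shows "(\<forall>i<k. FD (redcl A p r) (g i)) \<or>
         card (msum k (\<lambda>i. dil (lam i) (rescl A (g i) r)))
           \<ge> card (msum k (\<lambda>i. dil (lam i) (rescl A p r))) + card (rescl A p r)"
proof (cases "\<forall>i<k. FD (redcl A p r) (g i)")
  case True then show ?thesis by simp
next
  case False
  then obtain j where j: "j < k" "\<not> FD (redcl A p r) (g j)" by blast
  define G where "G = g j"
  define q where "q = (\<Prod>i\<in>{..<k}-{j}. g i)"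
  define P where "P = rescl A p r"
  have Gpos: "G > 0" unfolding G_def using assms(4) g_pos[OF assms(1,2) j(1)] j(1) by simp
  have pGq: "p = G * q" unfolding G_def q_def assms(5) using j(1)
    by (simp add: prod.remove)
  have copq: "coprime q G"
    unfolding q_def G_def
  proof (rule prod_coprime_left)
    fix i assume "i \<in> {..<k}-{j}"
    then show "coprime (g i) (g j)" using assms(4) cop_g[OF assms(3), of i j] j(1) by auto
  qed
  have coplam: "coprime (lam j) G" unfolding G_def using assms(4) cop_lam[OF assms(3) j(1)] j(1) by simp
  have Gdvd: "G dvd lam i" if "i < k" "i \<noteq> j" for i
    unfolding G_def using assms(4) j(1) that by (auto intro: Gcd_dvd)
  have gdvdp: "g i dvd p" if "i < k" for i
    unfolding assms(5) using that by (intro dvd_prodI) auto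
  have rmod: "r mod p = r" using assms(7,8) by simp
  have Psub: "P \<subseteq> rescl A (g i) r" if "i < k" for i
  proof
    fix x assume "x \<in> P"
    then have "x \<in> A" "x mod p = r mod p" unfolding P_def rescl_def by auto
    have "x mod g i = (x mod p) mod g i" using gdvdp[OF that] by (simp add: mod_mod_cancel)
    also have "\<dots> = (r mod p) mod g i" using \<open>x mod p = r mod p\<close> by simp
    also have "\<dots> = r mod g i" using gdvdp[OF that] by (simp add: mod_mod_cancel)
    finally show "x \<in> rescl A (g i) r" unfolding rescl_def using \<open>x \<in> A\<close> by simp
  qed
  have finP: "finite P" unfolding P_def rescl_def using assms(6) by simp
  from j(2) obtain c where c: "\<forall>y\<in>redcl A p r. \<not> [y = c] (mod G)"
    unfolding FD_def G_def by blast
  from assms(10) j(1) obtain a' where a': "a' \<in> redcl A G r" "[a' = r div G + q*c] (mod G)"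
    unfolding FD_def G_def by blast
  then obtain a where a: "a \<in> rescl A G r" "a' = (a - r mod G) div G"
    unfolding redcl_def by blast
  have amod: "a mod G = r mod G" using a(1) unfolding rescl_def by simp
  have "a - r mod G = G * (a div G)" using amod minus_mod_eq_mult_div[of a G] by simp
  then have "a' = a div G" using a(2) Gpos by simp
  have "a = G * (a div G) + a mod G" by simp
  then have aeq: "a = G * a' + r mod G" using \<open>a' = a div G\<close> amod by simp
  have rdec: "r = G * (r div G) + r mod G" by simp
  have "G dvd a' - (r div G + q*c)" using a'(2) by (simp add: cong_iff_dvd_diff dvd_diff_commute)
  then have "G*G dvd G * (a' - (r div G + q*c))" by simp
  moreover have "G * (a' - (r div G + q*c)) = a - (r + p*c)"
  proof -
    have "G * (a' - (r div G + q*c)) = G*a' - G*(r div G) - G*(q*c)" by (simp add: algebra_simps)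
    moreover have "a - (r + p*c) = G*a' + r mod G - r - G*(q*c)" using aeq pGq by (simp add: algebra_simps)
    ultimately show ?thesis using rdec by linarith
  qed
  ultimately have aG: "G*G dvd a - (r + p*c)" by simp
  obtain p0 where p0: "p0 \<in> P" using assms(9) P_def by blast
  define i0 where "i0 = (if j = 0 then 1 else (0::nat))"
  have i0: "i0 < k" "i0 \<noteq> j" unfolding i0_def using assms(1) by auto
  define w where "w i = (if i = j then a else p0)" for i
  define v where "v x i = (if i = i0 then x else w i)" for x i
  define f where "f x = (\<Sum>i<k. lam i * v x i)" for x
  define S where "S = msum k (\<lambda>i. dil (lam i) (rescl A (g i) r))"
  define SP where "SP = msum k (\<lambda>i. dil (lam i) P)"
  have vS: "v x i \<in> rescl A (g i) r" if "x \<in> P" "i < k" for x i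
    using that Psub[of i] p0 a(1) i0 unfolding v_def w_def G_def by auto
  have vP: "v x i \<in> P" if "x \<in> P" "i \<noteq> j" for x i
    using that p0 i0 unfolding v_def w_def by auto
  have vj: "v x j = a" for x using i0 unfolding v_def w_def by auto
  have fS: "f ` P \<subseteq> S"
  proof
    fix s assume "s \<in> f ` P"
    then obtain x where x: "x \<in> P" "s = f x" by blast
    have "\<forall>i<k. lam i * v x i \<in> dil (lam i) (rescl A (g i) r)"
      using vS[OF x(1)] unfolding dil_def by blast
    then show "s \<in> S" unfolding S_def msum_def f_def x(2) by blast
  qed
  have finj: "inj_on f P"
  proof
    fix x y assume xy: "x \<in> P" "y \<in> P" "f x = f y"
    have "f z = lam i0 * z + (\<Sum>i\<in>{..<k}-{i0}. lam i * w i)" for z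
    proof -
      have "f z = lam i0 * v z i0 + (\<Sum>i\<in>{..<k}-{i0}. lam i * v z i)"
        unfolding f_def using i0 by (simp add: sum.remove)
      moreover have "(\<Sum>i\<in>{..<k}-{i0}. lam i * v z i) = (\<Sum>i\<in>{..<k}-{i0}. lam i * w i)"
        by (rule sum.cong) (auto simp: v_def)
      ultimately show ?thesis by (simp add: v_def)
    qed
    then have "lam i0 * x = lam i0 * y" using xy(3) by simp
    then show "x = y" using assms(2) i0 by simp
  qed
  have SPS: "SP \<subseteq> S" unfolding SP_def S_def
    by (rule msum_mono) (auto simp: dil_def dest: Psub)
  have disj: "SP \<inter> f ` P = {}"
  proof (rule ccontr)
    assume "SP \<inter> f ` P \<noteq> {}"
    then obtain s x where sx: "s \<in> SP" "x \<in> P" "s = f x" by blast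
    from sx(1) obtain yy where yy: "s = (\<Sum>i<k. yy i)" "\<forall>i<k. yy i \<in> dil (lam i) P"
      unfolding SP_def msum_def by blast
    then have "\<forall>i<k. \<exists>z. z \<in> P \<and> yy i = lam i * z" unfolding dil_def by blast
    define xf where "xf i = (SOME z. z \<in> P \<and> yy i = lam i * z)" for i
    have xf: "\<forall>i<k. xf i \<in> P \<and> yy i = lam i * xf i"
    proof (intro allI impI)
      fix i assume "i < k"
      then have "\<exists>z. z \<in> P \<and> yy i = lam i * z" using \<open>\<forall>i<k. \<exists>z. z \<in> P \<and> yy i = lam i * z\<close> by blast
      then show "xf i \<in> P \<and> yy i = lam i * xf i" unfolding xf_def by (rule someI_ex)
    qed
    have s2: "s = (\<Sum>i<k. lam i * xf i)" using yy(1) xf by simp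
    have "0 = (\<Sum>i<k. lam i * (v x i - xf i))"
      using sx(3) s2 unfolding f_def by (simp add: right_diff_distrib sum_subtractf)
    also have "\<dots> = lam j * (a - xf j) + (\<Sum>i\<in>{..<k}-{j}. lam i * (v x i - xf i))"
      using j(1) vj by (simp add: sum.remove)
    finally have eq0: "lam j * (a - xf j) = - (\<Sum>i\<in>{..<k}-{j}. lam i * (v x i - xf i))" by linarith
    have "G*G dvd (\<Sum>i\<in>{..<k}-{j}. lam i * (v x i - xf i))"
    proof (rule dvd_sum)
      fix i assume i: "i \<in> {..<k}-{j}"
      have "v x i \<in> P" "xf i \<in> P" using vP[OF sx(2)] xf i by auto
      then have "v x i mod p = xf i mod p" unfolding P_def rescl_def by simp
      then have "p dvd v x i - xf i" by (simp only: mod_eq_dvd_iff)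
      then have "G dvd v x i - xf i" using pGq by (simp add: dvd_mult_left)
      moreover have "G dvd lam i" using Gdvd i by auto
      ultimately show "G*G dvd lam i * (v x i - xf i)" by (simp add: mult_dvd_mono)
    qed
    then have "G*G dvd lam j * (a - xf j)" using eq0 by simp
    moreover have "coprime (G*G) (lam j)" using coplam by (simp add: coprime_commute)
    ultimately have d1: "G*G dvd a - xf j" using coprime_dvd_mult_right_iff by blast
    have xfj: "xf j \<in> P" using xf j(1) by auto
    define y where "y = (xf j - r) div p"
    have "xf j mod p = r mod p" using xfj unfolding P_def rescl_def by simp
    then have "p dvd xf j - r" by (simp add: mod_eq_dvd_iff)
    then have xfy: "xf j = r + p * y" unfolding y_def by simp
    have yin: "y \<in> redcl A p r" unfolding redcl_def y_def rmod using xfj P_def by blast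
    have "G*G dvd (a - (r + p*c)) - (a - xf j)" using aG d1 by (rule dvd_diff)
    moreover have "(a - (r + p*c)) - (a - xf j) = (G*G) * 0 + G * (q * (y - c))"
      using xfy pGq by (simp add: algebra_simps)
    ultimately have "G*G dvd G * (q * (y - c))" by simp
    then have "G dvd q * (y - c)" using Gpos by (simp add: mult_dvd_mono)
    then have "G dvd y - c" using copq by (simp add: coprime_commute coprime_dvd_mult_right_iff)
    then have "[y = c] (mod G)" by (simp add: cong_iff_dvd_diff)
    then show False using c yin by blast
  qed
  have finS: "finite S" unfolding S_def
    by (rule msum_finite) (auto simp: dil_def rescl_def assms(6))
  have "card S \<ge> card (SP \<union> f ` P)" using finS SPS fS by (intro card_mono) auto
  moreover have "card (SP \<union> f ` P) = card SP + card P"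
  proof -
    have "finite SP" using finS SPS finite_subset by blast
    moreover have "finite (f ` P)" using finP by simp
    ultimately have "card (SP \<union> f ` P) = card SP + card (f ` P)" using disj by (rule card_Un_disjoint)
    then show ?thesis using card_image[OF finj] by simp
  qed
  ultimately show ?thesis unfolding S_def SP_def P_def by simp
qed

end
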